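(* Let $N\ge1$ and $p\in(0,1)$ with $\overline L:=[|\log p|/\log 2]$ and $\overline M:=[Np|\log p|/(\log 2)^2]$ satisfying $1\le\overline L\le\overline M$. Let $P^{\mathcal R-\mathcal P}_{N,\overline M,\overline L}$ be the distribution on $N\times\overline M$ binary matrices $C=(c_{i,a})$ with independent rows, each uniformly distributed among the binary vectors of length $\overline M$ with exactly $\overline L$ ones. For a variable $i$ and an integer $n\ge0$, let $\mathcal E^n_i(C)=1$ if $\sum_{j\ne i}\sum_{1\le a<b\le\overline M}c_{i,a}c_{i,b}c_{j,b}c_{j,a}>n$ and $\mathcal E^n_i(C)=0$ otherwise. Then $$\sum_{C}P^{\mathcal R-\mathcal P}_{N,\overline M,\overline L}(C)\,\mathcal E^n_i(C)\ \le\ \frac{N\overline L^6}{\overline M^3}+\Bigl(\frac{N\overline L^4}{\overline M^2}\Bigr)^{n+1}.$$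
   Context: $[x]$ denotes the integer part of $x$ and $\log$ the natural logarithm. $\mathcal E^n_i(C)$ indicates that variable $i$ lies on more than $n$ cycles of length $4$ in the bipartite variable–test graph of $C$. *)

theory Defs
  imports Complex_Main "HOL-Library.FuncSet"
begin

definition rows_RP :: "nat \<Rightarrow> nat \<Rightarrow> (nat \<Rightarrow> nat) set" where
  "rows_RP M L = {r \<in> {0..<M} \<rightarrow>\<^sub>E {0, 1}. card {a \<in> {0..<M}. r a = 1} = L}"

definition mats_RP :: "nat \<Rightarrow> nat \<Rightarrow> nat \<Rightarrow> (nat \<Rightarrow> nat \<Rightarrow> nat) set" where
  "mats_RP N M L = {0..<N} \<rightarrow>\<^sub>E rows_RP M L"

definition P_RP :: "nat \<Rightarrow> nat \<Rightarrow> nat \<Rightarrow> (nat \<Rightarrow> nat \<Rightarrow> nat) \<Rightarrow> real" where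
  "P_RP N M L C = (if C \<in> mats_RP N M L
      then (\<Prod>k\<in>{0..<N}. 1 / real (card (rows_RP M L))) else 0)"

definition cycles4 :: "nat \<Rightarrow> nat \<Rightarrow> (nat \<Rightarrow> nat \<Rightarrow> nat) \<Rightarrow> nat \<Rightarrow> nat" where
  "cycles4 N M C i = (\<Sum>j\<in>{0..<N} - {i}. \<Sum>b\<in>{0..<M}. \<Sum>a\<in>{0..<b}.
       C i a * C i b * C j b * C j a)"

definition E_event :: "nat \<Rightarrow> nat \<Rightarrow> nat \<Rightarrow> (nat \<Rightarrow> nat \<Rightarrow> nat) \<Rightarrow> nat \<Rightarrow> real" where
  "E_event n N M C i = (if cycles4 N M C i > n then 1 else 0)"

end

theory Submission
  imports Defs
begin


lemma choose_step: "Suc k * (n choose Suc k) = (n - k) * (n choose k)"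
  by (metis binomial_absorb_comp binomial_absorption)

lemma choose_ratio:
  fixes L M t :: nat assumes "L \<le> M"
  shows "(L choose t) * M ^ t \<le> (M choose t) * L ^ t"
proof (induction t)
  case 0 then show ?case by simp
next
  case (Suc t)
  have k: "(L - t) * M \<le> (M - t) * L"
  proof (cases "t \<le> L")
    case True
    then have "(L - t) * M = L * M - t * M" by (simp add: diff_mult_distrib)
    moreover have "(M - t) * L = M * L - t * L" by (simp add: diff_mult_distrib)
    moreover have "t * L \<le> t * M" using assms by simp
    ultimately show ?thesis by (metis diff_le_mono2 mult.commute)
  next
    case False then show ?thesis by simp
  qed
  have "Suc t * ((L choose Suc t) * M ^ Suc t) = (Suc t * (L choose Suc t)) * (M ^ t * M)"
    by (simp only: power_Suc2 ac_simps)
  also have "\<dots> = ((L - t) * (L choose t)) * (M ^ t * M)"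
    by (simp only: choose_step)
  also have "\<dots> = ((L - t) * M) * ((L choose t) * M ^ t)"
    by (simp only: power_Suc2 ac_simps)
  also have "\<dots> \<le> ((L - t) * M) * ((M choose t) * L ^ t)"
    using Suc.IH by (rule mult_left_mono) simp
  also have "\<dots> \<le> ((M - t) * L) * ((M choose t) * L ^ t)"
    using k by (rule mult_right_mono) simp
  also have "\<dots> = ((M - t) * (M choose t)) * (L ^ t * L)"
    by (simp only: power_Suc2 ac_simps)
  also have "\<dots> = (Suc t * (M choose Suc t)) * (L ^ t * L)"
    by (simp only: choose_step)
  also have "\<dots> = Suc t * ((M choose Suc t) * L ^ Suc t)"
    by (simp only: power_Suc2 ac_simps)
  finally show ?case by (simp only: mult_le_cancel1)
qed



definition supp :: "nat \<Rightarrow> (nat \<Rightarrow> nat) \<Rightarrow> nat set" where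
  "supp M r = {a\<in>{0..<M}. r a = 1}"

lemma supp_bij: "bij_betw (supp M) (rows_RP M L) {A. A \<subseteq> {0..<M} \<and> card A = L}"
  unfolding bij_betw_def
proof
  show "inj_on (supp M) (rows_RP M L)"
  proof (rule inj_onI)
    fix r s assume r: "r \<in> rows_RP M L" and s: "s \<in> rows_RP M L" and e: "supp M r = supp M s"
    show "r = s"
    proof (rule PiE_ext)
      show "r \<in> {0..<M} \<rightarrow>\<^sub>E {0,1::nat}" using r by (simp add: rows_RP_def)
      show "s \<in> {0..<M} \<rightarrow>\<^sub>E {0,1::nat}" using s by (simp add: rows_RP_def)
      fix a assume a: "a \<in> {0..<M}"
      have "r a \<in> {0,1}" "s a \<in> {0,1}" using r s a by (auto simp: rows_RP_def)
      moreover have "r a = 1 \<longleftrightarrow> s a = 1" using e a unfolding supp_def by blast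
      ultimately show "r a = s a" by auto
    qed
  qed
  show "supp M ` rows_RP M L = {A. A \<subseteq> {0..<M} \<and> card A = L}"
  proof
    show "supp M ` rows_RP M L \<subseteq> {A. A \<subseteq> {0..<M} \<and> card A = L}"
      by (auto simp: supp_def rows_RP_def)
    show "{A. A \<subseteq> {0..<M} \<and> card A = L} \<subseteq> supp M ` rows_RP M L"
    proof
      fix A assume A: "A \<in> {A. A \<subseteq> {0..<M} \<and> card A = L}"
      define r where "r = restrict (\<lambda>a. if a \<in> A then 1 else 0::nat) {0..<M}"
      have sr: "supp M r = A" using A by (auto simp: supp_def r_def)
      have "r \<in> {0..<M} \<rightarrow>\<^sub>E {0,1::nat}" by (auto simp: r_def)
      moreover have "card {a \<in> {0..<M}. r a = 1} = L" using sr A by (simp add: supp_def)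
      ultimately have "r \<in> rows_RP M L" by (simp add: rows_RP_def)
      then show "A \<in> supp M ` rows_RP M L" using sr by force
    qed
  qed
qed

lemma card_R: "card (rows_RP M L) = M choose L"
  using bij_betw_same_card[OF supp_bij[of M L]] n_subsets[of "{0..<M}" L] by simp

lemma finite_R: "finite (rows_RP M L)"
proof -
  have "rows_RP M L \<subseteq> {0..<M} \<rightarrow>\<^sub>E {0,1::nat}" by (auto simp: rows_RP_def)
  moreover have "finite ({0..<M} \<rightarrow>\<^sub>E {0,1::nat})" by (rule finite_PiE) auto
  ultimately show ?thesis by (rule finite_subset)
qed

lemma count_contain:
  assumes T: "T \<subseteq> {0..<M}" "card T = t" "t \<le> L"
  shows "card {s\<in>rows_RP M L. T \<subseteq> supp M s} = (M - t) choose (L - t)"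
proof -
  have b1: "bij_betw (supp M) {s\<in>rows_RP M L. T \<subseteq> supp M s} {A. A \<subseteq> {0..<M} \<and> card A = L \<and> T \<subseteq> A}"
  proof (rule bij_betw_subset[OF supp_bij[of M L]])
    show "{s \<in> rows_RP M L. T \<subseteq> supp M s} \<subseteq> rows_RP M L" by blast
    show "supp M ` {s \<in> rows_RP M L. T \<subseteq> supp M s} = {A. A \<subseteq> {0..<M} \<and> card A = L \<and> T \<subseteq> A}"
    proof -
      have im: "supp M ` rows_RP M L = {A. A \<subseteq> {0..<M} \<and> card A = L}"
        by (rule bij_betw_imp_surj_on[OF supp_bij])
      show ?thesis
      proof
        show "supp M ` {s \<in> rows_RP M L. T \<subseteq> supp M s} \<subseteq> {A. A \<subseteq> {0..<M} \<and> card A = L \<and> T \<subseteq> A}"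
          using im by auto
        show "{A. A \<subseteq> {0..<M} \<and> card A = L \<and> T \<subseteq> A} \<subseteq> supp M ` {s \<in> rows_RP M L. T \<subseteq> supp M s}"
        proof
          fix A assume A: "A \<in> {A. A \<subseteq> {0..<M} \<and> card A = L \<and> T \<subseteq> A}"
          then have "A \<in> supp M ` rows_RP M L" using im by simp
          then obtain s where "s \<in> rows_RP M L" "A = supp M s" by auto
          then show "A \<in> supp M ` {s \<in> rows_RP M L. T \<subseteq> supp M s}" using A by auto
        qed
      qed
    qed
  qed
  have fT: "finite T" by (rule finite_subset[OF T(1)]) simp
  have b2: "bij_betw (\<lambda>A. A - T) {A. A \<subseteq> {0..<M} \<and> card A = L \<and> T \<subseteq> A} {B. B \<subseteq> {0..<M} - T \<and> card B = L - t}"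
  proof (rule bij_betw_byWitness[where f' = "\<lambda>B. B \<union> T"])
    show "\<forall>a\<in>{A. A \<subseteq> {0..<M} \<and> card A = L \<and> T \<subseteq> A}. a - T \<union> T = a" by auto
    show "\<forall>a'\<in>{B. B \<subseteq> {0..<M} - T \<and> card B = L - t}. a' \<union> T - T = a'" by auto
    show "(\<lambda>A. A - T) ` {A. A \<subseteq> {0..<M} \<and> card A = L \<and> T \<subseteq> A} \<subseteq> {B. B \<subseteq> {0..<M} - T \<and> card B = L - t}"
      using T by (auto simp: card_Diff_subset fT)
    show "(\<lambda>B. B \<union> T) ` {B. B \<subseteq> {0..<M} - T \<and> card B = L - t} \<subseteq> {A. A \<subseteq> {0..<M} \<and> card A = L \<and> T \<subseteq> A}"
    proof clarify
      fix B assume B: "B \<subseteq> {0..<M} - T" "card B = L - t"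
      have "finite B" by (rule finite_subset[OF B(1)]) simp
      then have "card (B \<union> T) = L - t + t" using B T fT by (subst card_Un_disjoint) auto
      then show "B \<union> T \<subseteq> {0..<M} \<and> card (B \<union> T) = L \<and> T \<subseteq> B \<union> T" using B T by auto
    qed
  qed
  have "card {s\<in>rows_RP M L. T \<subseteq> supp M s} = card {B. B \<subseteq> {0..<M} - T \<and> card B = L - t}"
    using bij_betw_same_card[OF bij_betw_trans[OF b1 b2]] .
  also have "\<dots> = card ({0..<M} - T) choose (L - t)" by (rule n_subsets) simp
  also have "card ({0..<M} - T) = M - t" using T fT by (simp add: card_Diff_subset)
  finally show ?thesis .
qed



lemma card_supp: "r \<in> rows_RP M L \<Longrightarrow> card (supp M r) = L"
  by (simp add: rows_RP_def supp_def)

lemma q_bound: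
  assumes r: "r \<in> rows_RP M L"
  shows "card {s\<in>rows_RP M L. t \<le> card (supp M r \<inter> supp M s)} \<le> (L choose t) * ((M - t) choose (L - t))"
proof -
  let ?TT = "{T. T \<subseteq> supp M r \<and> card T = t}"
  have fs: "finite (supp M r)" by (simp add: supp_def)
  have sub: "{s\<in>rows_RP M L. t \<le> card (supp M r \<inter> supp M s)} \<subseteq> (\<Union>T\<in>?TT. {s\<in>rows_RP M L. T \<subseteq> supp M s})"
  proof
    fix s assume s: "s \<in> {s\<in>rows_RP M L. t \<le> card (supp M r \<inter> supp M s)}"
    then have "t \<le> card (supp M r \<inter> supp M s)" by simp
    then obtain T where T: "T \<subseteq> supp M r \<inter> supp M s" "card T = t"
      by (rule obtain_subset_with_card_n)
    then have "T \<in> ?TT" by simp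
    moreover have "s \<in> {s\<in>rows_RP M L. T \<subseteq> supp M s}" using s T by simp
    ultimately show "s \<in> (\<Union>T\<in>?TT. {s\<in>rows_RP M L. T \<subseteq> supp M s})" by (rule UN_I)
  qed
  have fTT: "finite ?TT" using fs by simp
  have "card {s\<in>rows_RP M L. t \<le> card (supp M r \<inter> supp M s)} \<le> card (\<Union>T\<in>?TT. {s\<in>rows_RP M L. T \<subseteq> supp M s})"
    by (rule card_mono[OF finite_subset[OF _ finite_R] sub]) auto
  also have "\<dots> \<le> (\<Sum>T\<in>?TT. card {s\<in>rows_RP M L. T \<subseteq> supp M s})" by (rule card_UN_le[OF fTT])
  also have "\<dots> = (\<Sum>T\<in>?TT. (M - t) choose (L - t))"
  proof (rule sum.cong)
    fix T assume T: "T \<in> ?TT"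
    have "T \<subseteq> {0..<M}" using T by (auto simp: supp_def)
    moreover have "t \<le> L" using T card_mono[OF fs] card_supp[OF r] by auto
    ultimately show "card {s\<in>rows_RP M L. T \<subseteq> supp M s} = (M - t) choose (L - t)"
      using T count_contain by auto
  qed simp
  also have "\<dots> = (L choose t) * ((M - t) choose (L - t))"
    using n_subsets[OF fs, of t] card_supp[OF r] by simp
  finally show ?thesis .
qed

lemma q_ratio:
  assumes r: "r \<in> rows_RP M L" and LM: "L \<le> M"
  shows "card {s\<in>rows_RP M L. t \<le> card (supp M r \<inter> supp M s)} * M ^ t \<le> card (rows_RP M L) * L ^ (2*t)"
proof (cases "t \<le> L")
  case False
  then have z: "(L choose t) = 0" by simp
  have "card {s\<in>rows_RP M L. t \<le> card (supp M r \<inter> supp M s)} = 0"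
    using q_bound[OF r, of t] unfolding z by simp
  then show ?thesis by simp
next
  case True
  let ?q = "card {s\<in>rows_RP M L. t \<le> card (supp M r \<inter> supp M s)}"
  let ?K = "card (rows_RP M L)"
  have cm: "(M choose L) * (L choose t) = (M choose t) * ((M - t) choose (L - t))"
    using choose_mult[OF True LM] .
  have pos: "0 < M choose t" using True LM by simp
  have "(M choose t) * (?q * M ^ t) \<le> (M choose t) * ((L choose t) * ((M - t) choose (L - t))) * M ^ t"
    using q_bound[OF r, of t] by (simp add: mult_ac)
  also have "\<dots> = (L choose t) * ?K * ((L choose t) * M ^ t)"
    by (simp add: card_R cm[symmetric] mult_ac)
  also have "\<dots> \<le> (L choose t) * ?K * ((M choose t) * L ^ t)"
    by (rule mult_left_mono[OF choose_ratio[OF LM]]) simp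
  also have "\<dots> \<le> L ^ t * ?K * ((M choose t) * L ^ t)"
  proof -
    have "L choose t \<le> L ^ t" by (rule binomial_le_pow[OF True])
    then show ?thesis by (intro mult_right_mono) auto
  qed
  also have "\<dots> = (M choose t) * (?K * L ^ (2*t))"
  proof -
    have "L ^ (2*t) = L ^ t * L ^ t" by (simp add: mult_2 power_add)
    then show ?thesis by (simp add: mult_ac)
  qed
  finally show ?thesis using pos by simp
qed



lemma count_PiE:
  fixes R :: "'b set" and Q :: "'b \<Rightarrow> 'b \<Rightarrow> bool" and I :: "'a set"
  assumes fI: "finite I" and fR: "finite R" and iI: "i \<in> I" and SI: "S \<subseteq> I" and iS: "i \<notin> S"
    and qb: "\<And>r. r \<in> R \<Longrightarrow> card {s\<in>R. Q r s} \<le> q"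
  shows "card {C \<in> PiE I (\<lambda>_. R). \<forall>j\<in>S. Q (C i) (C j)} * card R ^ card S \<le> q ^ card S * card R ^ card I"
proof -
  define F where "F r j = (if j = i then {r} else if j \<in> S then {s\<in>R. Q r s} else R)" for r j
  define G where "G j = (if j = i then 1 else if j \<in> S then q else card R)" for j
  let ?K = "card R"
  have sub: "{C \<in> PiE I (\<lambda>_. R). \<forall>j\<in>S. Q (C i) (C j)} \<subseteq> (\<Union>r\<in>R. PiE I (F r))"
  proof
    fix C assume C: "C \<in> {C \<in> PiE I (\<lambda>_. R). \<forall>j\<in>S. Q (C i) (C j)}"
    then have "C i \<in> R" using iI by auto
    moreover have "C \<in> PiE I (F (C i))" using C SI unfolding PiE_iff F_def by auto
    ultimately show "C \<in> (\<Union>r\<in>R. PiE I (F r))" by blast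
  qed
  have fin: "finite (\<Union>r\<in>R. PiE I (F r))"
    using fR fI by (intro finite_UN_I finite_PiE) (auto simp: F_def)
  have "card {C \<in> PiE I (\<lambda>_. R). \<forall>j\<in>S. Q (C i) (C j)} \<le> card (\<Union>r\<in>R. PiE I (F r))"
    by (rule card_mono[OF fin sub])
  also have "\<dots> \<le> (\<Sum>r\<in>R. card (PiE I (F r)))" by (rule card_UN_le[OF fR])
  also have "\<dots> \<le> (\<Sum>r\<in>R. \<Prod>j\<in>I. G j)"
  proof (rule sum_mono)
    fix r assume r: "r \<in> R"
    have "card (PiE I (F r)) = (\<Prod>j\<in>I. card (F r j))" by (rule card_PiE[OF fI])
    also have "\<dots> \<le> (\<Prod>j\<in>I. G j)"
      by (rule prod_mono) (auto simp: F_def G_def qb r)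
    finally show "card (PiE I (F r)) \<le> (\<Prod>j\<in>I. G j)" .
  qed
  also have "\<dots> = ?K * (\<Prod>j\<in>I. G j)" by simp
  finally have c: "card {C \<in> PiE I (\<lambda>_. R). \<forall>j\<in>S. Q (C i) (C j)} \<le> ?K * (\<Prod>j\<in>I. G j)" .
  have "(\<Prod>j\<in>I. G j) = G i * (\<Prod>j\<in>I - {i}. G j)"
    using fI iI by (simp add: prod.remove)
  also have "\<dots> = (\<Prod>j\<in>I - {i}. if j \<in> S then q else ?K)"
    by (simp add: G_def)
  also have "\<dots> = q ^ card S * ?K ^ card (I - {i} - S)"
  proof -
    have e1: "(I - {i}) \<inter> {j. j \<in> S} = S" using SI iS by auto
    have e2: "(I - {i}) \<inter> - {j. j \<in> S} = I - {i} - S" by auto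
    show ?thesis using fI by (simp only: prod.If_cases finite_Diff e1 e2 prod_constant)
  qed
  finally have p: "(\<Prod>j\<in>I. G j) = q ^ card S * ?K ^ card (I - {i} - S)" .
  have cI: "card (I - {i} - S) + card S + 1 = card I"
  proof -
    have "card (I - {i} - S) = card (I - {i}) - card S"
      using SI iS fI by (intro card_Diff_subset) (auto intro: finite_subset)
    moreover have "card S \<le> card (I - {i})" using SI iS fI by (intro card_mono) auto
    moreover have "card (I - {i}) + 1 = card I" using fI iI
      by (metis Suc_eq_plus1 card_Suc_Diff1)
    ultimately show ?thesis by simp
  qed
  have "card {C \<in> PiE I (\<lambda>_. R). \<forall>j\<in>S. Q (C i) (C j)} * ?K ^ card S \<le> ?K * (q ^ card S * ?K ^ card (I - {i} - S)) * ?K ^ card S"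
    using c p by (intro mult_right_mono) auto
  also have "\<dots> = q ^ card S * ?K ^ (card (I - {i} - S) + card S + 1)"
    by (simp add: power_add mult_ac)
  also have "\<dots> = q ^ card S * ?K ^ card I" using cI by simp
  finally show ?thesis .
qed



lemma g_eq:
  assumes r: "r \<in> rows_RP M L" and s: "s \<in> rows_RP M L"
  shows "(\<Sum>b\<in>{0..<M}. \<Sum>a\<in>{0..<b}. r a * r b * s b * s a)
       = card {(b,a). b < M \<and> a < b \<and> a \<in> supp M r \<inter> supp M s \<and> b \<in> supp M r \<inter> supp M s}"
proof -
  let ?X = "supp M r \<inter> supp M s"
  have t: "r a * r b * s b * s a = (if (b,a) \<in> {(b,a). b < M \<and> a < b \<and> a \<in> ?X \<and> b \<in> ?X} then 1 else 0)"
    if "b < M" "a < b" for a b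
  proof -
    have "a < M" using that by simp
    then have "r a \<in> {0,1}" "r b \<in> {0,1}" "s a \<in> {0,1}" "s b \<in> {0,1}"
      using r s that by (auto simp: rows_RP_def)
    then show ?thesis using that \<open>a < M\<close> by (auto simp: supp_def)
  qed
  have "(\<Sum>b\<in>{0..<M}. \<Sum>a\<in>{0..<b}. r a * r b * s b * s a)
      = (\<Sum>b\<in>{0..<M}. \<Sum>a\<in>{0..<b}. (if (b,a) \<in> {(b,a). b < M \<and> a < b \<and> a \<in> ?X \<and> b \<in> ?X} then 1 else 0))"
    by (intro sum.cong refl) (simp add: t)
  also have "\<dots> = (\<Sum>(b,a)\<in>(SIGMA b:{0..<M}. {0..<b}). (if (b,a) \<in> {(b,a). b < M \<and> a < b \<and> a \<in> ?X \<and> b \<in> ?X} then 1 else 0))"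
    by (rule sum.Sigma) auto
  also have "\<dots> = (\<Sum>p\<in>(SIGMA b:{0..<M}. {0..<b}). (if p \<in> {(b,a). b < M \<and> a < b \<and> a \<in> ?X \<and> b \<in> ?X} then 1 else 0))"
    by (simp add: case_prod_beta')
  also have "\<dots> = card ((SIGMA b:{0..<M}. {0..<b}) \<inter> {(b,a). b < M \<and> a < b \<and> a \<in> ?X \<and> b \<in> ?X})"
    by (simp add: sum.If_cases)
  also have "(SIGMA b:{0..<M}. {0..<b}) \<inter> {(b,a). b < M \<and> a < b \<and> a \<in> ?X \<and> b \<in> ?X}
      = {(b,a). b < M \<and> a < b \<and> a \<in> ?X \<and> b \<in> ?X}" by auto
  finally show ?thesis .
qed


lemma pairs_bound:
  fixes X :: "nat set"
  assumes fX: "finite X" and c2: "card X \<le> 2"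
  shows "card {(b,a). b < M \<and> a < b \<and> a \<in> X \<and> b \<in> X} \<le> (if 2 \<le> card X then 1 else 0)"
proof (cases "2 \<le> card X")
  case False
  then have "card X \<le> Suc 0" by simp
  then have all: "\<forall>a\<in>X. \<forall>b\<in>X. a = b" using card_le_Suc0_iff_eq[OF fX] by blast
  have E: "{(b,a). b < M \<and> a < b \<and> a \<in> X \<and> b \<in> X} = {}"
  proof (intro equals0I)
    fix p assume p: "p \<in> {(b,a). b < M \<and> a < b \<and> a \<in> X \<and> b \<in> X}"
    then obtain a b where "a < b" "a \<in> X" "b \<in> X" by blast
    with all show False by (metis less_irrefl)
  qed
  show ?thesis unfolding E using False by simp
next
  case True
  then have "card X = 2" using c2 by simp
  then obtain x y where xy: "X = {x,y}" "x \<noteq> y" by (meson card_2_iff)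
  have "{(b,a). b < M \<and> a < b \<and> a \<in> X \<and> b \<in> X} \<subseteq> {(max x y, min x y)}"
  proof
    fix p assume "p \<in> {(b,a). b < M \<and> a < b \<and> a \<in> X \<and> b \<in> X}"
    then obtain a b where "p = (b,a)" "a < b" "a \<in> {x,y}" "b \<in> {x,y}" using xy by blast
    then show "p \<in> {(max x y, min x y)}" by (simp add: max_def min_def) linarith
  qed
  then have "card {(b,a). b < M \<and> a < b \<and> a \<in> X \<and> b \<in> X} \<le> card {(max x y, min x y)}"
    by (intro card_mono) auto
  then show ?thesis using True by simp
qed

lemma g_bound:
  assumes r: "r \<in> rows_RP M L" and s: "s \<in> rows_RP M L"
    and c2: "card (supp M r \<inter> supp M s) \<le> 2"
  shows "(\<Sum>b\<in>{0..<M}. \<Sum>a\<in>{0..<b}. r a * r b * s b * s a)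
       \<le> (if 2 \<le> card (supp M r \<inter> supp M s) then 1 else 0)"
  unfolding g_eq[OF r s] by (rule pairs_bound[OF _ c2]) (simp add: supp_def)



lemma count_real:
  assumes LM: "L \<le> M" and L1: "1 \<le> L" and fI: "finite I" and iI: "i \<in> I" and SI: "S \<subseteq> I" and iS: "i \<notin> S"
  shows "real (card {C \<in> PiE I (\<lambda>_. rows_RP M L). \<forall>j\<in>S. t \<le> card (supp M (C i) \<inter> supp M (C j))})
    \<le> real (card (rows_RP M L)) ^ card I * (real L ^ (2*t) / real M ^ t) ^ card S"
proof -
  let ?R = "rows_RP M L"
  let ?K = "card ?R"
  let ?f = "\<lambda>r. card {s\<in>?R. t \<le> card (supp M r \<inter> supp M s)}"
  define q where "q = Max (?f ` ?R)"
  have Kpos: "0 < ?K" using LM by (simp add: card_R)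
  have Mpos: "0 < M" using LM L1 by simp
  then have nonempty: "?R \<noteq> {}" using Kpos by auto
  have qb: "?f r \<le> q" if "r \<in> ?R" for r
    unfolding q_def using finite_R that by (intro Max_ge) auto
  have "q \<in> ?f ` ?R" unfolding q_def by (rule Max_in) (use finite_R nonempty in auto)
  then obtain r0 where r0: "q = ?f r0" "r0 \<in> ?R" by (rule imageE)
  have qM: "real q * real M ^ t \<le> real ?K * real L ^ (2*t)"
  proof -
    have "q * M ^ t \<le> ?K * L ^ (2*t)" using q_ratio[OF r0(2) LM, of t] r0(1) by simp
    then show ?thesis by (simp only: of_nat_mult[symmetric] of_nat_power[symmetric] of_nat_le_iff)
  qed
  let ?c = "card {C \<in> PiE I (\<lambda>_. ?R). \<forall>j\<in>S. t \<le> card (supp M (C i) \<inter> supp M (C j))}"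
  have cnt: "?c * ?K ^ card S \<le> q ^ card S * ?K ^ card I"
    by (rule count_PiE[OF fI finite_R iI SI iS]) (use qb in auto)
  then have cntr: "real ?c * real ?K ^ card S \<le> real q ^ card S * real ?K ^ card I"
    by (simp only: of_nat_mult[symmetric] of_nat_power[symmetric] of_nat_le_iff)
  have "real ?c = real ?c * real ?K ^ card S / real ?K ^ card S" using Kpos by simp
  also have "\<dots> \<le> real q ^ card S * real ?K ^ card I / real ?K ^ card S"
    using cntr Kpos by (intro divide_right_mono) auto
  also have "\<dots> = real ?K ^ card I * (real q / real ?K) ^ card S"
    by (simp add: power_divide)
  also have "\<dots> \<le> real ?K ^ card I * (real L ^ (2*t) / real M ^ t) ^ card S"
  proof (intro mult_left_mono power_mono)
    show "real q / real ?K \<le> real L ^ (2*t) / real M ^ t"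
    proof -
      have "real q * real M ^ t \<le> real L ^ (2*t) * real ?K" using qM by (simp add: mult.commute)
      then show ?thesis using Kpos Mpos by (simp add: divide_le_eq le_divide_eq)
    qed
  qed auto
  finally show ?thesis .
qed



theorem lemma4:
  fixes N n i :: nat and p :: real
  assumes "N \<ge> 1" and "0 < p" and "p < 1"
    and "Lb = nat \<lfloor>\<bar>ln p\<bar> / ln 2\<rfloor>"
    and "Mb = nat \<lfloor>real N * p * \<bar>ln p\<bar> / (ln 2)^2\<rfloor>"
    and "1 \<le> Lb" and "Lb \<le> Mb"
    and "i < N"
  shows "(\<Sum>C\<in>mats_RP N Mb Lb. P_RP N Mb Lb C * E_event n N Mb C i)
     \<le> real N * real Lb ^ 6 / real Mb ^ 3 + (real N * real Lb ^ 4 / real Mb ^ 2) ^ (n + 1)"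
proof -
  define L where "L = Lb"
  define M where "M = Mb"
  have L1: "1 \<le> L" and LM: "L \<le> M" using assms unfolding L_def M_def by auto
  let ?R = "rows_RP M L"
  let ?K = "card ?R"
  let ?I = "{0..<N}"
  let ?J = "?I - {i}"
  let ?mats = "PiE ?I (\<lambda>_. ?R)"
  let ?ov = "\<lambda>C j. card (supp M (C i) \<inter> supp M (C j))"
  have Kpos: "0 < ?K" using LM by (simp add: card_R)
  have Mpos: "0 < M" using LM L1 by simp
  have iI: "i \<in> ?I" using assms by simp
  have mats: "mats_RP N M L = ?mats" by (simp add: mats_RP_def)
  define Bad where "Bad = {C \<in> ?mats. n < cycles4 N M C i}"
  define B3 where "B3 = (\<Union>j\<in>?J. {C \<in> ?mats. \<forall>j'\<in>{j}. 3 \<le> ?ov C j'})"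
  define SS where "SS = {S. S \<subseteq> ?J \<and> card S = n + 1}"
  define B2 where "B2 = (\<Union>S\<in>SS. {C \<in> ?mats. \<forall>j\<in>S. 2 \<le> ?ov C j})"
  have finJ: "finite ?J" by simp
  have finSS: "finite SS" unfolding SS_def by simp
  have finmats: "finite ?mats" using finite_R by (intro finite_PiE) auto
  have sub: "Bad \<subseteq> B3 \<union> B2"
  proof
    fix C assume C: "C \<in> Bad"
    then have Cm: "C \<in> ?mats" and cyc: "n < cycles4 N M C i" by (auto simp: Bad_def)
    have rowC: "C j \<in> ?R" if "j < N" for j using Cm that by auto
    show "C \<in> B3 \<union> B2"
    proof (cases "\<exists>j\<in>?J. 3 \<le> ?ov C j")
      case True
      then show ?thesis using Cm unfolding B3_def by blast
    next
      case False
      have le2: "?ov C j \<le> 2" if "j \<in> ?J" for j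
      proof -
        have "\<not> 3 \<le> ?ov C j" using False that by blast
        then show ?thesis by simp
      qed
      have "cycles4 N M C i = (\<Sum>j\<in>?J. \<Sum>b\<in>{0..<M}. \<Sum>a\<in>{0..<b}. C i a * C i b * C j b * C j a)"
        by (simp add: cycles4_def)
      also have "\<dots> \<le> (\<Sum>j\<in>?J. if 2 \<le> ?ov C j then 1 else 0)"
      proof (rule sum_mono)
        fix j assume j: "j \<in> ?J"
        show "(\<Sum>b\<in>{0..<M}. \<Sum>a\<in>{0..<b}. C i a * C i b * C j b * C j a) \<le> (if 2 \<le> ?ov C j then 1 else 0)"
          by (rule g_bound[OF rowC rowC le2[OF j]]) (use j assms in auto)
      qed
      also have "\<dots> = card {j \<in> ?J. 2 \<le> ?ov C j}"
        by (simp add: sum.If_cases Int_def conj_commute)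
      finally have "n + 1 \<le> card {j \<in> ?J. 2 \<le> ?ov C j}" using cyc by simp
      then obtain S where S: "S \<subseteq> {j \<in> ?J. 2 \<le> ?ov C j}" "card S = n + 1"
        by (meson obtain_subset_with_card_n)
      then have "S \<in> SS" unfolding SS_def by auto
      then show ?thesis using S Cm unfolding B2_def by blast
    qed
  qed
  have B3b: "real (card B3) \<le> real (N - 1) * (real ?K ^ N * (real L ^ 6 / real M ^ 3))"
  proof -
    have "card B3 \<le> (\<Sum>j\<in>?J. card {C \<in> ?mats. \<forall>j'\<in>{j}. 3 \<le> ?ov C j'})"
      unfolding B3_def by (rule card_UN_le[OF finJ])
    then have "real (card B3) \<le> (\<Sum>j\<in>?J. real (card {C \<in> ?mats. \<forall>j'\<in>{j}. 3 \<le> ?ov C j'}))"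
      by (simp only: of_nat_sum[symmetric] of_nat_le_iff)
    also have "\<dots> \<le> (\<Sum>j\<in>?J. real ?K ^ N * (real L ^ 6 / real M ^ 3))"
    proof (rule sum_mono)
      fix j assume j: "j \<in> ?J"
      have "real (card {C \<in> ?mats. \<forall>j'\<in>{j}. 3 \<le> ?ov C j'})
          \<le> real ?K ^ card ?I * (real L ^ (2*3) / real M ^ 3) ^ card {j}"
        by (rule count_real[OF LM L1]) (use j iI in auto)
      then show "real (card {C \<in> ?mats. \<forall>j'\<in>{j}. 3 \<le> ?ov C j'}) \<le> real ?K ^ N * (real L ^ 6 / real M ^ 3)"
        by simp
    qed
    also have "\<dots> = real (N - 1) * (real ?K ^ N * (real L ^ 6 / real M ^ 3))"
      using iI by simp
    finally show ?thesis .
  qed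
  have B2b: "real (card B2) \<le> real (N - 1 choose (n+1)) * (real ?K ^ N * (real L ^ 4 / real M ^ 2) ^ (n+1))"
  proof -
    have "card B2 \<le> (\<Sum>S\<in>SS. card {C \<in> ?mats. \<forall>j\<in>S. 2 \<le> ?ov C j})"
      unfolding B2_def by (rule card_UN_le[OF finSS])
    then have "real (card B2) \<le> (\<Sum>S\<in>SS. real (card {C \<in> ?mats. \<forall>j\<in>S. 2 \<le> ?ov C j}))"
      by (simp only: of_nat_sum[symmetric] of_nat_le_iff)
    also have "\<dots> \<le> (\<Sum>S\<in>SS. real ?K ^ N * (real L ^ 4 / real M ^ 2) ^ (n+1))"
    proof (rule sum_mono)
      fix S assume S: "S \<in> SS"
      have "real (card {C \<in> ?mats. \<forall>j\<in>S. 2 \<le> ?ov C j})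
          \<le> real ?K ^ card ?I * (real L ^ (2*2) / real M ^ 2) ^ card S"
        by (rule count_real[OF LM L1]) (use S iI in \<open>auto simp: SS_def\<close>)
      then show "real (card {C \<in> ?mats. \<forall>j\<in>S. 2 \<le> ?ov C j}) \<le> real ?K ^ N * (real L ^ 4 / real M ^ 2) ^ (n+1)"
        using S by (simp add: SS_def)
    qed
    also have "\<dots> = real (card SS) * (real ?K ^ N * (real L ^ 4 / real M ^ 2) ^ (n+1))"
      by simp
    also have "card SS = (N - 1) choose (n+1)"
      unfolding SS_def using n_subsets[OF finJ, of "n+1"] iI by simp
    finally show ?thesis .
  qed
  have lhs: "(\<Sum>C\<in>mats_RP N Mb Lb. P_RP N Mb Lb C * E_event n N Mb C i) = real (card Bad) / real ?K ^ N"
  proof -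
    have "(\<Sum>C\<in>mats_RP N Mb Lb. P_RP N Mb Lb C * E_event n N Mb C i)
        = (\<Sum>C\<in>?mats. if n < cycles4 N M C i then (1 / real ?K) ^ N else 0)"
      unfolding L_def[symmetric] M_def[symmetric] mats
      by (intro sum.cong refl) (auto simp: P_RP_def E_event_def mats)
    also have "\<dots> = real (card Bad) * (1 / real ?K) ^ N"
      by (simp add: sum.If_cases[OF finmats] Bad_def Int_def conj_commute)
    finally show ?thesis by (simp add: power_one_over)
  qed
  have cB: "real (card Bad) \<le> real (card B3) + real (card B2)"
  proof -
    have "card Bad \<le> card (B3 \<union> B2)"
      by (rule card_mono[OF _ sub]) (auto simp: B3_def B2_def intro!: finite_subset[OF _ finmats])
    also have "\<dots> \<le> card B3 + card B2" by (rule card_Un_le)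
    finally show ?thesis by linarith
  qed
  have ch: "real (N - 1 choose (n+1)) \<le> real N ^ (n+1)"
  proof (cases "n + 1 \<le> N - 1")
    case True
    then have "N - 1 choose (n+1) \<le> (N - 1) ^ (n+1)" by (rule binomial_le_pow)
    also have "\<dots> \<le> N ^ (n+1)" by (rule power_mono) auto
    finally show ?thesis by (simp only: of_nat_power[symmetric] of_nat_le_iff)
  next
    case False
    then have z: "N - 1 choose (n+1) = 0" by (intro binomial_eq_0) simp
    show ?thesis unfolding z by simp
  qed
  have KN: "0 < real ?K ^ N" using Kpos by simp
  have "real (card Bad) / real ?K ^ N
      \<le> (real (N - 1) * (real ?K ^ N * (real L ^ 6 / real M ^ 3))
         + real (N - 1 choose (n+1)) * (real ?K ^ N * (real L ^ 4 / real M ^ 2) ^ (n+1))) / real ?K ^ N"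
    using cB B3b B2b KN by (intro divide_right_mono) auto
  also have "\<dots> = real (N - 1) * (real L ^ 6 / real M ^ 3)
         + real (N - 1 choose (n+1)) * (real L ^ 4 / real M ^ 2) ^ (n+1)"
    using KN by (simp add: field_simps)
  also have "\<dots> \<le> real N * (real L ^ 6 / real M ^ 3) + real N ^ (n+1) * (real L ^ 4 / real M ^ 2) ^ (n+1)"
    by (intro add_mono mult_right_mono ch) auto
  also have "\<dots> = real N * real L ^ 6 / real M ^ 3 + (real N * real L ^ 4 / real M ^ 2) ^ (n + 1)"
    by (simp only: times_divide_eq_right[symmetric] power_mult_distrib)
  finally show ?thesis using lhs unfolding L_def M_def by simp
qed


end
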